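(* Fix $\Delta>0$. Let $G_1,\dots,G_n$ be independent uniformly random great circles on $S^2$. For each pair $i\ne j$, let $z_{ij}$ be one of the two intersection points of $G_i$ and $G_j$ (chosen uniformly at random) and ${\cal C}_{ij}$ the disk on $S^2$ centered at $z_{ij}$ of radius $(2+\Delta)\sqrt{\pi/n}$. Then with probability tending to $1$ as $n\to\infty$, the configuration is typical, i.e. the number of great circles $G_k$ passing through each ${\cal C}_{ij}$ is $\Theta(\sqrt n)$ simultaneously for all pairs $i\neq j$ (that is, lies between $c\sqrt n$ and $C\sqrt n$ for constants $0<c\le C$ independent of $n$).
   Context: $S^2$ is the sphere in $\mathbb R^3$ of unit surface area. For $x\in S^2$, the great circle $G(x)$ is the intersection of $S^2$ with the plane through the center perpendicular to the diameter through $x$; a uniformly random great circle is $G(x)$ with $x$ uniformly distributed on $S^2$. A great circle "passes through" a disk if it intersects it. *)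

theory Defs
  imports "HOL-Probability.Probability"
begin

text \<open>Sphere of unit surface area: radius r with 4 pi r^2 = 1.\<close>
definition sph_r :: real where
  "sph_r = 1 / (2 * sqrt pi)"

definition S2 :: "(real^3) set" where
  "S2 = sphere 0 sph_r"

definition great_circle :: "real^3 \<Rightarrow> (real^3) set" where
  "great_circle x = {y \<in> S2. x \<bullet> y = 0}"

definition sdist :: "real^3 \<Rightarrow> real^3 \<Rightarrow> real" where
  "sdist y z = sph_r * arccos ((y \<bullet> z) / sph_r\<^sup>2)"

definition sdisk :: "real^3 \<Rightarrow> real \<Rightarrow> (real^3) set" where
  "sdisk z \<rho> = {y \<in> S2. sdist z y \<le> \<rho>}"

definition passes_through :: "real^3 \<Rightarrow> (real^3) set \<Rightarrow> bool" where
  "passes_through x D \<longleftrightarrow> great_circle x \<inter> D \<noteq> {}"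

text \<open>Uniform (normalised surface) measure on S2: radial projection of the
  uniform distribution on the unit ball.\<close>
definition unif_S2 :: "(real^3) measure" where
  "unif_S2 = distr (uniform_measure lborel (ball 0 1)) borel (\<lambda>v. (sph_r / norm v) *\<^sub>R v)"

definition coin :: "bool measure" where
  "coin = measure_pmf (pmf_of_set UNIV)"

text \<open>The two intersection points of G(x) and G(y) are +- r (x cross y)/|x cross y|;
  the boolean selects one of them.\<close>
definition isect_pt :: "real^3 \<Rightarrow> real^3 \<Rightarrow> bool \<Rightarrow> real^3" where
  "isect_pt x y b = (if b then 1 else -1) *\<^sub>R ((sph_r / norm (cross3 x y)) *\<^sub>R cross3 x y)"

definition pairs :: "nat \<Rightarrow> (nat \<times> nat) set" where
  "pairs n = {p. fst p < snd p \<and> snd p < n}"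

text \<open>Probability space for n circles: n independent uniform points x_k (G_k = G(x_k))
  and independent fair coins, one per pair i<j, choosing z_ij.\<close>
definition config_space :: "nat \<Rightarrow> ((nat \<Rightarrow> real^3) \<times> (nat \<times> nat \<Rightarrow> bool)) measure" where
  "config_space n = (PiM {..<n} (\<lambda>_. unif_S2)) \<Otimes>\<^sub>M (PiM (pairs n) (\<lambda>_. coin))"

definition zpt :: "(nat \<Rightarrow> real^3) \<times> (nat \<times> nat \<Rightarrow> bool) \<Rightarrow> nat \<Rightarrow> nat \<Rightarrow> real^3" where
  "zpt \<omega> i j = isect_pt (fst \<omega> (min i j)) (fst \<omega> (max i j)) (snd \<omega> (min i j, max i j))"

definition num_through :: "real \<Rightarrow> nat \<Rightarrow> (nat \<Rightarrow> real^3) \<times> (nat \<times> nat \<Rightarrow> bool) \<Rightarrow> nat \<Rightarrow> nat \<Rightarrow> nat" where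
  "num_through \<Delta> n \<omega> i j =
     card {k \<in> {..<n}. passes_through (fst \<omega> k) (sdisk (zpt \<omega> i j) ((2 + \<Delta>) * sqrt (pi / real n)))}"

end

theory Submission
  imports Defs "HOL-Real_Asymp.Real_Asymp"
begin


lemma sph_r_pos: "sph_r > 0" by (simp add: sph_r_def)

lemma S2_iff: "y \<in> S2 \<longleftrightarrow> norm y = sph_r" by (simp add: S2_def)

lemma passes_iff:
  fixes x z :: "real^3"
  assumes nz: "norm z = sph_r" and th: "0 \<le> \<theta>" "\<theta> < pi/2"
  shows "passes_through x (sdisk z (sph_r*\<theta>)) \<longleftrightarrow> \<bar>x \<bullet> z\<bar> \<le> sin \<theta> * norm x * sph_r"
proof
  assume "passes_through x (sdisk z (sph_r*\<theta>))"
  then obtain y where y: "norm y = sph_r" "x \<bullet> y = 0" "sdist z y \<le> sph_r * \<theta>"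
    by (auto simp: passes_through_def great_circle_def sdisk_def S2_iff)
  define c where "c = (z \<bullet> y) / sph_r\<^sup>2"
  have r: "sph_r > 0" by (rule sph_r_pos)
  have "\<bar>z \<bullet> y\<bar> \<le> sph_r\<^sup>2" using Cauchy_Schwarz_ineq2[of z y] nz y(1) by (simp add: power2_eq_square)
  hence c1: "\<bar>c\<bar> \<le> 1" using r by (simp add: c_def abs_div field_simps)
  have "arccos c \<le> \<theta>" using y(3) r by (simp add: sdist_def c_def)
  moreover have "0 \<le> arccos c" using c1 by (intro arccos_lbound) auto
  ultimately have "sin (arccos c) \<le> sin \<theta>" using th by (intro sin_monotone_2pi_le) auto
  hence s: "sqrt (1 - c\<^sup>2) \<le> sin \<theta>" using c1 by (simp add: sin_arccos abs_le_iff)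
  have zz: "z \<bullet> z = sph_r\<^sup>2" "y \<bullet> y = sph_r\<^sup>2" using nz y(1) by (simp_all flip: power2_norm_eq_inner)
  have zyc: "z \<bullet> y = c * sph_r\<^sup>2" using r by (simp add: c_def)
  have "(norm (z - c *\<^sub>R y))\<^sup>2 = z \<bullet> z - 2 * c * (z \<bullet> y) + c\<^sup>2 * (y \<bullet> y)"
    unfolding power2_norm_eq_inner by (simp add: inner_diff_left inner_diff_right inner_commute power2_eq_square algebra_simps)
  also have "\<dots> = sph_r\<^sup>2 * (1 - c\<^sup>2)" unfolding zz zyc by (simp add: algebra_simps power2_eq_square)
  finally have "(norm (z - c *\<^sub>R y))\<^sup>2 = sph_r\<^sup>2 * (1 - c\<^sup>2)" .
  hence "sqrt ((norm (z - c *\<^sub>R y))\<^sup>2) = sqrt (sph_r\<^sup>2) * sqrt (1 - c\<^sup>2)"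
    by (simp add: real_sqrt_mult)
  hence nw: "norm (z - c *\<^sub>R y) = sph_r * sqrt (1 - c\<^sup>2)" using r by simp
  have "x \<bullet> z = x \<bullet> (z - c *\<^sub>R y)" using y(2) by (simp add: inner_diff_right)
  hence "\<bar>x \<bullet> z\<bar> \<le> norm x * norm (z - c *\<^sub>R y)" using Cauchy_Schwarz_ineq2 by simp
  also have "\<dots> \<le> norm x * (sph_r * sin \<theta>)" unfolding nw using s r by (intro mult_left_mono) auto
  finally show "\<bar>x \<bullet> z\<bar> \<le> sin \<theta> * norm x * sph_r" by (simp add: ac_simps)
next
  assume H: "\<bar>x \<bullet> z\<bar> \<le> sin \<theta> * norm x * sph_r"
  have r: "sph_r > 0" by (rule sph_r_pos)
  show "passes_through x (sdisk z (sph_r*\<theta>))"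
  proof (cases "x = 0")
    case True
    have "z \<in> S2" using nz by (simp add: S2_iff)
    moreover have "sdist z z = 0" using nz r by (simp add: sdist_def power2_norm_eq_inner[symmetric])
    ultimately show ?thesis using True th r
      by (auto simp: passes_through_def great_circle_def sdisk_def)
  next
    case False
    define a where "a = (x \<bullet> z) / (x \<bullet> x)"
    define w where "w = z - a *\<^sub>R x"
    have nx: "norm x > 0" using False by simp
    have xx: "x \<bullet> x = (norm x)\<^sup>2" by (simp add: power2_norm_eq_inner)
    have xxp: "x \<bullet> x > 0" using False by simp
    have xw: "x \<bullet> w = 0" using xxp by (simp add: w_def a_def inner_diff_right)
    have zz: "z \<bullet> z = sph_r\<^sup>2" using nz by (simp flip: power2_norm_eq_inner)
    have zw0: "z \<bullet> w = z \<bullet> z - a * (x \<bullet> z)" by (simp add: w_def inner_diff_right inner_commute)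
    have ww: "w \<bullet> w = z \<bullet> w - a * (x \<bullet> w)" by (simp add: w_def inner_diff_left inner_commute)
    have zw: "z \<bullet> w = (norm w)\<^sup>2" using ww xw by (simp add: power2_norm_eq_inner)
    have w2: "(norm w)\<^sup>2 = sph_r\<^sup>2 - (x \<bullet> z)\<^sup>2 / (norm x)\<^sup>2"
      using zw zw0 zz xx by (simp add: a_def power2_eq_square)
    have "(x \<bullet> z)\<^sup>2 \<le> (sin \<theta> * norm x * sph_r)\<^sup>2"
      using H by (metis abs_ge_zero power2_abs power_mono)
    hence "(x \<bullet> z)\<^sup>2 / (norm x)\<^sup>2 \<le> (sin \<theta>)\<^sup>2 * sph_r\<^sup>2" using nx by (simp add: field_simps power_mult_distrib)
    hence w2ge: "(norm w)\<^sup>2 \<ge> sph_r\<^sup>2 * (cos \<theta>)\<^sup>2" unfolding w2 using sin_squared_eq[of \<theta>] by (simp add: algebra_simps)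
    have cpos: "cos \<theta> > 0" using th by (intro cos_gt_zero_pi) auto
    have nwge: "norm w \<ge> sph_r * cos \<theta>" using w2ge r cpos
      by (metis mult_nonneg_nonneg norm_ge_zero order_less_imp_le power_mult_distrib power2_le_imp_le)
    hence wpos: "norm w > 0" using r cpos by (smt (verit) mult_pos_pos)
    define y where "y = (sph_r / norm w) *\<^sub>R w"
    have ny: "norm y = sph_r" using wpos r by (simp add: y_def)
    have xy: "x \<bullet> y = 0" using xw by (simp add: y_def)
    have zy: "(z \<bullet> y) / sph_r\<^sup>2 = norm w / sph_r" using zw wpos r by (simp add: y_def power2_eq_square field_simps)
    have le1: "norm w / sph_r \<le> 1"
    proof -
      have "(norm w)\<^sup>2 \<le> sph_r\<^sup>2" unfolding w2 by simp
      hence "norm w \<le> sph_r" using r by (simp add: power2_le_iff_abs_le)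
      thus ?thesis using r by simp
    qed
    have gecos: "cos \<theta> \<le> norm w / sph_r" using nwge r by (simp add: field_simps)
    have "arccos (norm w / sph_r) \<le> arccos (cos \<theta>)"
      using gecos le1 cpos by (intro arccos_le_arccos) auto
    also have "\<dots> = \<theta>" using th by (intro arccos_cos) auto
    finally have "sdist z y \<le> sph_r * \<theta>" using r by (simp add: sdist_def zy)
    thus ?thesis using ny xy by (auto simp: passes_through_def great_circle_def sdisk_def S2_iff)
  qed
qed

definition Q :: "real \<Rightarrow> real^3 \<Rightarrow> real^3 \<Rightarrow> real^3 \<Rightarrow> bool" where
  "Q s x a b \<longleftrightarrow> cross3 a b \<noteq> 0 \<and> \<bar>x \<bullet> cross3 a b\<bar> \<le> s * norm x * norm (cross3 a b)"

lemma Q_sym: "Q s x a b = Q s x b a"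
proof -
  have "cross3 b a = - cross3 a b" by (simp add: cross3_simps)
  thus ?thesis by (simp add: Q_def)
qed

lemma passes_isect:
  assumes th: "0 \<le> \<theta>" "\<theta> < pi/2"
  shows "passes_through x (sdisk (isect_pt a b t) (sph_r*\<theta>)) \<longleftrightarrow> Q (sin \<theta>) x a b"
proof (cases "cross3 a b = 0")
  case True
  have r: "sph_r > 0" by (rule sph_r_pos)
  have "isect_pt a b t = 0" using True by (simp add: isect_pt_def)
  moreover have "\<not> sdist 0 y \<le> sph_r * \<theta>" for y
    using th r by (simp add: sdist_def)
  ultimately show ?thesis using True
    by (auto simp: passes_through_def sdisk_def Q_def)
next
  case False
  define c where "c = cross3 a b"
  have r: "sph_r > 0" by (rule sph_r_pos)
  have nc: "norm c > 0" using False by (simp add: c_def)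
  define sg where "sg = (if t then 1 else -1 :: real)"
  have sg: "\<bar>sg\<bar> = 1" by (simp add: sg_def)
  have z: "isect_pt a b t = (sg * (sph_r / norm c)) *\<^sub>R c" by (simp add: isect_pt_def c_def sg_def)
  have nz: "norm (isect_pt a b t) = sph_r" unfolding z using nc r sg by (simp add: abs_mult)
  have xz: "\<bar>x \<bullet> isect_pt a b t\<bar> = (sph_r / norm c) * \<bar>x \<bullet> c\<bar>"
    unfolding z using nc r sg by (simp add: abs_mult)
  have "(sph_r / norm c) * \<bar>x \<bullet> c\<bar> \<le> sin \<theta> * norm x * sph_r \<longleftrightarrow> \<bar>x \<bullet> c\<bar> \<le> sin \<theta> * norm x * norm c"
    using nc r by (simp add: field_simps)
  thus ?thesis using passes_iff[OF nz th, of x] xz False by (simp add: Q_def c_def)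
qed




definition proj :: "real^3 \<Rightarrow> real^3" where "proj v = (sph_r / norm v) *\<^sub>R v"

lemma proj_meas[measurable]: "proj \<in> borel_measurable borel"
  unfolding proj_def by measurable

lemma ball_fin: "emeasure lborel (ball (0::real^3) 1) \<noteq> \<infinity>"
  using emeasure_lborel_ball_finite by (simp add: less_top[symmetric])

lemma ball_sub_box: "ball (0::real^3) 1 \<subseteq> cbox (-1) 1"
proof
  fix v :: "real^3" assume "v \<in> ball 0 1"
  hence "norm v < 1" by simp
  hence "\<bar>v $ i\<bar> \<le> 1" for i using component_le_norm_cart[of v i] by simp
  thus "v \<in> cbox (-1) 1" by (auto simp: mem_box_cart abs_le_iff)
qed

lemma norm3: "norm (v::real^3) = sqrt ((v$1)\<^sup>2 + (v$2)\<^sup>2 + (v$3)\<^sup>2)"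
  unfolding norm_vec_def L2_set_def sum_3 by simp
lemma content3: "(\<forall>i. a$i \<le> b$i) \<Longrightarrow> measure lborel (cbox a (b::real^3)) = (b$1-a$1)*(b$2-a$2)*(b$3-a$3)"
proof -
  assume "\<forall>i. a$i \<le> b$i"
  hence "a \<in> cbox a b" by (simp add: mem_box_cart)
  hence "measure lborel (cbox a b) = (\<Prod>i\<in>UNIV. b$i - a$i)" using content_cbox_cart[of a b] by auto
  also have "\<dots> = (b$1-a$1)*(b$2-a$2)*(b$3-a$3)" unfolding UNIV_3 by simp
  finally show ?thesis .
qed

lemma box_sub_ball: "cbox (- vec (1/2)) (vec (1/2)) \<subseteq> ball (0::real^3) 1"
proof
  fix v :: "real^3" assume "v \<in> cbox (- vec (1/2)) (vec (1/2))"
  hence h: "- (1/2) \<le> v$i \<and> v$i \<le> 1/2" for i by (simp add: mem_box_cart)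
  have "\<bar>v $ i\<bar> \<le> 1/2" for i using h[of i] by linarith
  hence "(v$i)\<^sup>2 \<le> (1/2)\<^sup>2" for i using abs_le_square_iff[of "v$i" "1/2"] by simp
  hence "(v$i)\<^sup>2 \<le> 1/4" for i by (simp add: power2_eq_square)
  hence q: "(v$i)\<^sup>2 \<le> 1/4" for i .
  have "(v$1)\<^sup>2 + (v$2)\<^sup>2 + (v$3)\<^sup>2 < 1" using q[of 1] q[of 2] q[of 3] by linarith
  thus "v \<in> ball 0 1" by (simp add: norm3)
qed

lemma ball_measure: "1 \<le> measure lborel (ball (0::real^3) 1)" "measure lborel (ball (0::real^3) 1) \<le> 8"
proof -
  have "measure lborel (cbox (- vec (1/2)) (vec (1/2)::real^3)) \<le> measure lborel (ball (0::real^3) 1)"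
    using box_sub_ball ball_fin by (intro measure_mono_fmeasurable) (auto simp: fmeasurable_def less_top)
  moreover have "measure lborel (cbox (- vec (1/2)) (vec (1/2)::real^3)) = 1" by (subst content3) auto
  ultimately show "1 \<le> measure lborel (ball (0::real^3) 1)" by simp
  have "measure lborel (ball (0::real^3) 1) \<le> measure lborel (cbox (-1) (1::real^3))"
    using ball_sub_box by (intro measure_mono_fmeasurable) auto
  moreover have "measure lborel (cbox (-1) (1::real^3)) = 8" by (subst content3) auto
  ultimately show "measure lborel (ball (0::real^3) 1) \<le> 8" by simp
qed

lemma ball_emeasure_pos: "emeasure lborel (ball (0::real^3) 1) \<noteq> 0"
proof
  assume "emeasure lborel (ball (0::real^3) 1) = 0"
  then have "measure lborel (ball (0::real^3) 1) = 0" by (simp add: measure_def)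
  with ball_measure(1) show False by simp
qed

lemma unif_prob: "prob_space unif_S2"
proof -
  have "prob_space (uniform_measure lborel (ball (0::real^3) 1))"
    by (rule prob_space_uniform_measure[OF ball_emeasure_pos ball_fin])
  moreover have "(\<lambda>v. (sph_r / norm v) *\<^sub>R v) \<in> measurable (uniform_measure lborel (ball (0::real^3) 1)) borel"
    by measurable
  ultimately show ?thesis unfolding unif_S2_def by (rule prob_space.prob_space_distr)
qed

lemma sets_unif[simp, measurable_cong]: "sets unif_S2 = sets borel"
  by (simp add: unif_S2_def)

lemma space_unif[simp]: "space unif_S2 = UNIV"
  by (simp add: unif_S2_def)

lemma unif_cone:
  assumes E: "E \<in> sets borel" and E0: "0 \<in> E" and cone: "\<And>v t. t > 0 \<Longrightarrow> (t *\<^sub>R v \<in> E \<longleftrightarrow> v \<in> E)"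
  shows "measure unif_S2 E = measure lborel (ball 0 1 \<inter> E) / measure lborel (ball (0::real^3) 1)"
proof -
  have pe: "proj v \<in> E \<longleftrightarrow> v \<in> E" for v
  proof (cases "v = 0")
    case False
    thus ?thesis using cone[of "sph_r / norm v" v] sph_r_pos by (simp add: proj_def)
  qed (use E0 in \<open>simp add: proj_def\<close>)
  have pre: "proj -` E = E" using pe by auto
  have "measure unif_S2 E = measure (uniform_measure lborel (ball 0 1)) (proj -` E \<inter> UNIV)"
    unfolding unif_S2_def proj_def[symmetric] using E by (subst measure_distr) auto
  also have "\<dots> = measure lborel (ball 0 1 \<inter> E) / measure lborel (ball (0::real^3) 1)"
    unfolding pre using E ball_fin ball_emeasure_pos by (subst measure_uniform_measure) auto
  finally show ?thesis .
qed


lemma ball_fmeas: "ball (0::real^3) 1 \<in> fmeasurable lborel"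
  using ball_fin by (auto simp: fmeasurable_def less_top)

lemma ball_int_fmeas: "A \<in> sets borel \<Longrightarrow> ball (0::real^3) 1 \<inter> A \<in> fmeasurable lborel"
  by (rule fmeasurableI2[OF ball_fmeas]) auto

lemma E1_meas[measurable]: "{v::real^3. \<bar>v$1\<bar> \<le> s * norm v} \<in> sets borel"
  by measurable

lemma E1_upper: "0 \<le> s \<Longrightarrow> measure lborel (ball 0 1 \<inter> {v::real^3. \<bar>v$1\<bar> \<le> s * norm v}) \<le> 8 * s"
proof -
  assume s: "0 \<le> s"
  have sub: "ball 0 1 \<inter> {v::real^3. \<bar>v$1\<bar> \<le> s * norm v} \<subseteq> cbox (vector[-s,-1,-1]) (vector[s,1,1])"
  proof
    fix v :: "real^3" assume v: "v \<in> ball 0 1 \<inter> {v::real^3. \<bar>v$1\<bar> \<le> s * norm v}"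
    hence n: "norm v < 1" by simp
    have "\<bar>v$1\<bar> \<le> s * norm v" using v by simp
    also have "\<dots> \<le> s" using n s by (simp add: mult_left_le)
    finally have a1: "\<bar>v$1\<bar> \<le> s" .
    have "\<bar>v $ i\<bar> \<le> 1" for i using component_le_norm_cart[of v i] n by simp
    thus "v \<in> cbox (vector[-s,-1,-1]) (vector[s,1,1])"
      using a1 by (auto simp: mem_box_cart forall_3 abs_le_iff)
  qed
  have "measure lborel (ball 0 1 \<inter> {v::real^3. \<bar>v$1\<bar> \<le> s * norm v}) \<le> measure lborel (cbox (vector[-s,-1,-1]) (vector[s,1,1]::real^3))"
    using sub by (intro measure_mono_fmeasurable) auto
  also have "\<dots> = 8 * s" using s by (subst content3) (auto simp: forall_3)
  finally show ?thesis .
qed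

lemma E1_lower: "0 \<le> s \<Longrightarrow> s \<le> 1 \<Longrightarrow> s / 16 \<le> measure lborel (ball 0 1 \<inter> {v::real^3. \<bar>v$1\<bar> \<le> s * norm v})"
proof -
  assume s: "0 \<le> s" "s \<le> 1"
  have sub: "cbox (vector[-s/4,1/2,-1/4]) (vector[s/4,3/4,1/4]) \<subseteq> ball 0 1 \<inter> {v::real^3. \<bar>v$1\<bar> \<le> s * norm v}"
  proof
    fix v :: "real^3" assume "v \<in> cbox (vector[-s/4,1/2,-1/4]) (vector[s/4,3/4,1/4])"
    hence h: "-s/4 \<le> v$1" "v$1 \<le> s/4" "1/2 \<le> v$2" "v$2 \<le> 3/4" "-1/4 \<le> v$3" "v$3 \<le> 1/4"
      by (auto simp: mem_box_cart forall_3)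
    have a1: "\<bar>v$1\<bar> \<le> s/4" using h by linarith
    have "\<bar>v$1\<bar> \<le> 1/4" using h s by linarith
    hence q1: "(v$1)\<^sup>2 \<le> (1/4)\<^sup>2" using abs_le_square_iff[of "v$1" "1/4"] by simp
    have "\<bar>v$2\<bar> \<le> 3/4" using h by linarith
    hence q2: "(v$2)\<^sup>2 \<le> (3/4)\<^sup>2" using abs_le_square_iff[of "v$2" "3/4"] by simp
    have "\<bar>v$3\<bar> \<le> 1/4" using h by linarith
    hence q3: "(v$3)\<^sup>2 \<le> (1/4)\<^sup>2" using abs_le_square_iff[of "v$3" "1/4"] by simp
    have "(v$1)\<^sup>2 + (v$2)\<^sup>2 + (v$3)\<^sup>2 < 1" using q1 q2 q3 by (simp add: power2_eq_square)
    hence "norm v < 1" by (simp add: norm3)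
    moreover have "1/2 \<le> norm v" using component_le_norm_cart[of v 2] h by simp
    moreover have "\<bar>v$1\<bar> \<le> s * norm v"
    proof -
      have "s * (1/2) \<le> s * norm v" using s \<open>1/2 \<le> norm v\<close> by (intro mult_left_mono) auto
      thus ?thesis using a1 s by linarith
    qed
    ultimately show "v \<in> ball 0 1 \<inter> {v::real^3. \<bar>v$1\<bar> \<le> s * norm v}" by simp
  qed
  have "measure lborel (cbox (vector[-s/4,1/2,-1/4]) (vector[s/4,3/4,1/4]::real^3)) = s/16"
    using s by (subst content3) (auto simp: forall_3)
  moreover have "measure lborel (cbox (vector[-s/4,1/2,-1/4]) (vector[s/4,3/4,1/4]::real^3)) \<le> measure lborel (ball 0 1 \<inter> {v::real^3. \<bar>v$1\<bar> \<le> s * norm v})"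
    using sub by (intro measure_mono_fmeasurable ball_int_fmeas E1_meas) auto
  ultimately show ?thesis by simp
qed


lemma band_meas[measurable]: "{x::real^3. \<bar>x \<bullet> c\<bar> \<le> s * norm x * norm c} \<in> sets borel"
  by measurable

lemma rot_measure:
  fixes c :: "real^3"
  assumes c: "c \<noteq> 0"
  shows "measure lborel (ball 0 1 \<inter> {x. \<bar>x \<bullet> c\<bar> \<le> s * norm x * norm c}) =
         measure lborel (ball 0 1 \<inter> {v::real^3. \<bar>v$1\<bar> \<le> s * norm v})"
proof -
  define u where "u = c /\<^sub>R norm c"
  have nu: "norm u = 1" using c by (simp add: u_def)
  have "\<exists>f. orthogonal_transformation f \<and> f (axis 1 1 :: real^3) = u"
    apply (rule orthogonal_transformation_exists_1[of "axis 1 1" u])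
      apply (rule norm_axis_1)
     apply (rule nu)
    apply blast
    done
  then obtain f where f: "orthogonal_transformation f" "f (axis 1 1 :: real^3) = u" by blast
  have fi: "f w \<bullet> u = w $ 1" for w
  proof -
    have "f w \<bullet> u = f w \<bullet> f (axis 1 1 :: real^3)" using f by simp
    also have "\<dots> = w \<bullet> (axis 1 1 :: real^3)" using f(1) by (simp add: orthogonal_transformation_def)
    finally show ?thesis by (simp add: inner_axis)
  qed
  have fn: "norm (f w) = norm w" for w using f(1) by (rule orthogonal_transformation_norm)
  have cu: "x \<bullet> c = norm c * (x \<bullet> u)" for x using c by (simp add: u_def)
  have key: "f w \<in> ball 0 1 \<inter> {x. \<bar>x \<bullet> c\<bar> \<le> s * norm x * norm c} \<longleftrightarrow> w \<in> ball 0 1 \<inter> {v::real^3. \<bar>v$1\<bar> \<le> s * norm v}" for w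
  proof -
    have "\<bar>f w \<bullet> c\<bar> \<le> s * norm (f w) * norm c \<longleftrightarrow> norm c * \<bar>w$1\<bar> \<le> norm c * (s * norm w)"
      unfolding cu fi fn by (simp add: abs_mult ac_simps)
    also have "\<dots> \<longleftrightarrow> \<bar>w$1\<bar> \<le> s * norm w" using c by simp
    finally show ?thesis using fn[of w] by simp
  qed
  have img: "ball 0 1 \<inter> {x. \<bar>x \<bullet> c\<bar> \<le> s * norm x * norm c} = f ` (ball 0 1 \<inter> {v::real^3. \<bar>v$1\<bar> \<le> s * norm v})"
  proof (intro set_eqI iffI)
    fix x assume x: "x \<in> ball 0 1 \<inter> {x. \<bar>x \<bullet> c\<bar> \<le> s * norm x * norm c}"
    obtain w where "x = f w" using orthogonal_transformation_surj[OF f(1)] by (metis surjD)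
    have "w \<in> ball 0 1 \<inter> {v::real^3. \<bar>v$1\<bar> \<le> s * norm v}" using key[of w] x \<open>x = f w\<close> by simp
    thus "x \<in> f ` (ball 0 1 \<inter> {v::real^3. \<bar>v$1\<bar> \<le> s * norm v})" using \<open>x = f w\<close> by blast
  next
    fix x assume "x \<in> f ` (ball 0 1 \<inter> {v::real^3. \<bar>v$1\<bar> \<le> s * norm v})"
    then obtain w where w: "x = f w" "w \<in> ball 0 1 \<inter> {v::real^3. \<bar>v$1\<bar> \<le> s * norm v}" by (rule imageE) simp
    thus "x \<in> ball 0 1 \<inter> {x. \<bar>x \<bullet> c\<bar> \<le> s * norm x * norm c}" using key[of w] by simp
  qed
  have S: "ball 0 1 \<inter> {v::real^3. \<bar>v$1\<bar> \<le> s * norm v} \<in> sets lborel" by measurable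
  have Sl: "ball 0 1 \<inter> {v::real^3. \<bar>v$1\<bar> \<le> s * norm v} \<in> lmeasurable"
  proof (rule bounded_set_imp_lmeasurable)
    show "bounded (ball 0 1 \<inter> {v::real^3. \<bar>v$1\<bar> \<le> s * norm v})"
      by (rule bounded_subset[OF bounded_ball]) blast
    show "ball 0 1 \<inter> {v::real^3. \<bar>v$1\<bar> \<le> s * norm v} \<in> sets lebesgue"
      using S by (rule sets_completionI_sets)
  qed
  have T: "ball 0 1 \<inter> {x. \<bar>x \<bullet> c\<bar> \<le> s * norm x * norm c} \<in> sets lborel" by measurable
  have "measure lborel (ball 0 1 \<inter> {x. \<bar>x \<bullet> c\<bar> \<le> s * norm x * norm c}) =
        measure lebesgue (ball 0 1 \<inter> {x. \<bar>x \<bullet> c\<bar> \<le> s * norm x * norm c})"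
    using T by simp
  also have "\<dots> = measure lebesgue (ball 0 1 \<inter> {v::real^3. \<bar>v$1\<bar> \<le> s * norm v})"
    unfolding img by (rule measure_orthogonal_image[OF f(1) Sl])
  also have "\<dots> = measure lborel (ball 0 1 \<inter> {v::real^3. \<bar>v$1\<bar> \<le> s * norm v})"
    using S by simp
  finally show ?thesis .
qed

lemma band:
  fixes c :: "real^3"
  assumes c: "c \<noteq> 0" and s: "0 \<le> s" "s \<le> 1"
  shows "s / 128 \<le> measure unif_S2 {x. \<bar>x \<bullet> c\<bar> \<le> s * norm x * norm c}"
    and "measure unif_S2 {x. \<bar>x \<bullet> c\<bar> \<le> s * norm x * norm c} \<le> 8 * s"
proof -
  have eq: "measure unif_S2 {x. \<bar>x \<bullet> c\<bar> \<le> s * norm x * norm c} =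
    measure lborel (ball 0 1 \<inter> {v::real^3. \<bar>v$1\<bar> \<le> s * norm v}) / measure lborel (ball (0::real^3) 1)"
  proof -
    have cone: "(t *\<^sub>R v \<in> {x. \<bar>x \<bullet> c\<bar> \<le> s * norm x * norm c}) = (v \<in> {x. \<bar>x \<bullet> c\<bar> \<le> s * norm x * norm c})"
      if t: "t > 0" for v :: "real^3" and t :: real
    proof -
      have "\<bar>(t *\<^sub>R v) \<bullet> c\<bar> \<le> s * norm (t *\<^sub>R v) * norm c \<longleftrightarrow> t * \<bar>v \<bullet> c\<bar> \<le> t * (s * norm v * norm c)"
        using t by (simp add: abs_mult ac_simps)
      also have "\<dots> \<longleftrightarrow> \<bar>v \<bullet> c\<bar> \<le> s * norm v * norm c" using t by (simp add: mult.assoc)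
      finally show ?thesis by simp
    qed
    have "measure unif_S2 {x. \<bar>x \<bullet> c\<bar> \<le> s * norm x * norm c} = measure lborel (ball 0 1 \<inter> {x. \<bar>x \<bullet> c\<bar> \<le> s * norm x * norm c}) / measure lborel (ball (0::real^3) 1)"
      by (rule unif_cone[OF band_meas _ cone]) simp_all
    thus ?thesis by (simp only: rot_measure[OF c])
  qed
  have B: "1 \<le> measure lborel (ball (0::real^3) 1)" "measure lborel (ball (0::real^3) 1) \<le> 8"
    by (rule ball_measure)+
  have U: "measure lborel (ball 0 1 \<inter> {v::real^3. \<bar>v$1\<bar> \<le> s * norm v}) \<le> 8 * s" by (rule E1_upper[OF s(1)])
  have L: "s / 16 \<le> measure lborel (ball 0 1 \<inter> {v::real^3. \<bar>v$1\<bar> \<le> s * norm v})" by (rule E1_lower[OF s])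
  show "measure unif_S2 {x. \<bar>x \<bullet> c\<bar> \<le> s * norm x * norm c} \<le> 8 * s"
  proof -
    have "measure lborel (ball 0 1 \<inter> {v::real^3. \<bar>v$1\<bar> \<le> s * norm v}) / measure lborel (ball (0::real^3) 1)
       \<le> measure lborel (ball 0 1 \<inter> {v::real^3. \<bar>v$1\<bar> \<le> s * norm v}) / 1"
      using B by (intro divide_left_mono) auto
    thus ?thesis unfolding eq using U by simp
  qed
  show "s / 128 \<le> measure unif_S2 {x. \<bar>x \<bullet> c\<bar> \<le> s * norm x * norm c}"
  proof -
    have "s / 128 = (s/16) / 8" by simp
    also have "\<dots> \<le> measure lborel (ball 0 1 \<inter> {v::real^3. \<bar>v$1\<bar> \<le> s * norm v}) / measure lborel (ball (0::real^3) 1)"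
      using B L s by (intro frac_le) auto
    finally show ?thesis unfolding eq .
  qed
qed




lemma emeasure_PiM_insert_split:
  assumes ps: "product_sigma_finite M" and I: "finite I" "i \<notin> I"
    and B: "B \<in> sets (PiM (insert i I) M)"
  shows "emeasure (PiM (insert i I) M) B =
    (\<integral>\<^sup>+ y. emeasure (PiM I M) {X \<in> space (PiM I M). X(i := y) \<in> B} \<partial>M i)"
proof -
  interpret product_sigma_finite M by (rule ps)
  have "emeasure (PiM (insert i I) M) B = (\<integral>\<^sup>+ X. indicator B X \<partial>PiM (insert i I) M)"
    using B by simp
  also have "\<dots> = (\<integral>\<^sup>+ y. (\<integral>\<^sup>+ X. indicator B (X(i := y)) \<partial>PiM I M) \<partial>M i)"
    using B I by (intro product_nn_integral_insert_rev) auto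
  also have "\<dots> = (\<integral>\<^sup>+ y. emeasure (PiM I M) {X \<in> space (PiM I M). X(i := y) \<in> B} \<partial>M i)"
  proof (rule nn_integral_cong)
    fix y assume y: "y \<in> space (M i)"
    have m: "(\<lambda>X. X(i := y)) \<in> measurable (PiM I M) (PiM (insert i I) M)"
      by (rule measurable_fun_upd[where J=I]) (use y in auto)
    have S: "{X \<in> space (PiM I M). X(i := y) \<in> B} \<in> sets (PiM I M)"
      using measurable_sets[OF m B] by (simp add: vimage_def Int_def conj_commute)
    have "(\<integral>\<^sup>+ X. indicator B (X(i := y)) \<partial>PiM I M) = (\<integral>\<^sup>+ X. indicator {X \<in> space (PiM I M). X(i := y) \<in> B} X \<partial>PiM I M)"
      by (rule nn_integral_cong) (simp split: split_indicator)
    also have "\<dots> = emeasure (PiM I M) {X \<in> space (PiM I M). X(i := y) \<in> B}"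
      using S by simp
    finally show "(\<integral>\<^sup>+ X. indicator B (X(i := y)) \<partial>PiM I M) = emeasure (PiM I M) {X \<in> space (PiM I M). X(i := y) \<in> B}" .
  qed
  finally show ?thesis .
qed

lemma nn_integral_two:
  assumes N: "prob_space N" and A[measurable]: "A \<in> sets N" and ab: "0 \<le> a" "0 \<le> b"
  shows "(\<integral>\<^sup>+ x. ennreal (if x \<in> A then a else b) \<partial>N) = ennreal (a * measure N A + b * (1 - measure N A))"
proof -
  interpret prob_space N by (rule N)
  have "(\<integral>\<^sup>+ x. ennreal (if x \<in> A then a else b) \<partial>N) =
        (\<integral>\<^sup>+ x. ennreal a * indicator A x + ennreal b * indicator (space N - A) x \<partial>N)"
    by (rule nn_integral_cong) (simp split: split_indicator)
  also have "\<dots> = (\<integral>\<^sup>+ x. ennreal a * indicator A x \<partial>N) + (\<integral>\<^sup>+ x. ennreal b * indicator (space N - A) x \<partial>N)"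
    by (rule nn_integral_add) auto
  also have "\<dots> = ennreal a * emeasure N A + ennreal b * emeasure N (space N - A)"
    by (simp add: nn_integral_cmult_indicator)
  also have "\<dots> = ennreal a * ennreal (measure N A) + ennreal b * ennreal (1 - measure N A)"
    by (simp add: emeasure_eq_measure prob_compl)
  also have "\<dots> = ennreal (a * measure N A) + ennreal (b * (1 - measure N A))"
    using ab by (simp add: ennreal_mult prob_le_1)
  also have "\<dots> = ennreal (a * measure N A + b * (1 - measure N A))"
    using ab by (intro ennreal_plus[symmetric]) (auto simp: prob_le_1)
  finally show ?thesis .
qed

lemma prod_integral_iid:
  assumes N: "prob_space N" and K: "finite K" and A[measurable]: "A \<in> sets N" and ab: "0 \<le> a" "0 \<le> b"
  shows "(\<integral>\<^sup>+ X. (\<Prod>k\<in>K. ennreal (if X k \<in> A then a else b)) \<partial>PiM K (\<lambda>_. N)) =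
         ennreal ((a * measure N A + b * (1 - measure N A)) ^ card K)"
proof -
  interpret prob_space N by (rule N)
  interpret P: product_sigma_finite "\<lambda>_. N"
    by (simp add: product_sigma_finite_def sigma_finite_measure_axioms)
  have "(\<integral>\<^sup>+ X. (\<Prod>k\<in>K. ennreal (if X k \<in> A then a else b)) \<partial>PiM K (\<lambda>_. N)) =
        (\<Prod>k\<in>K. (\<integral>\<^sup>+ x. ennreal (if x \<in> A then a else b) \<partial>N))"
    using K by (intro P.product_nn_integral_prod) auto
  also have "\<dots> = (\<Prod>k\<in>K. ennreal (a * measure N A + b * (1 - measure N A)))"
    using nn_integral_two[OF N A ab] by simp
  also have "\<dots> = ennreal (a * measure N A + b * (1 - measure N A)) ^ card K"
    by simp
  also have "\<dots> = ennreal ((a * measure N A + b * (1 - measure N A)) ^ card K)"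
    using ab by (intro ennreal_power) (auto simp: prob_le_1)
  finally show ?thesis .
qed


lemma card_sum: "finite K \<Longrightarrow> real (card {k\<in>K. P k}) = (\<Sum>k\<in>K. if P k then 1 else 0)"
  by (simp add: sum.inter_filter[symmetric])

lemma chernoff:
  assumes N: "prob_space N" and K: "finite K" and A[measurable]: "A \<in> sets N"
    and B: "B \<in> sets (PiM K (\<lambda>_. N))" and BS: "\<And>X. X \<in> B \<Longrightarrow> t1 \<le> real (card {k\<in>K. X k \<in> A}) \<or> real (card {k\<in>K. X k \<in> A}) \<le> t2"
  shows "emeasure (PiM K (\<lambda>_. N)) B
    \<le> ennreal (exp (real (card K) * measure N A * (exp 1 - 1) - t1) + exp (t2 - real (card K) * measure N A * (1 - exp (-1))))"
proof -
  interpret prob_space N by (rule N)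
  define p where "p = measure N A"
  have p: "0 \<le> p" "p \<le> 1" by (auto simp: p_def prob_le_1)
  define m where "m = card K"
  define S where "S X = real (card {k\<in>K. X k \<in> A})" for X :: "'b \<Rightarrow> 'a"
  define Set where "Set = B"
  define F1 where "F1 X = ennreal (exp (-t1)) * (\<Prod>k\<in>K. ennreal (if X k \<in> A then exp 1 else 1))" for X :: "'b \<Rightarrow> 'a"
  define F2 where "F2 X = ennreal (exp t2) * (\<Prod>k\<in>K. ennreal (if X k \<in> A then exp (-1) else 1))" for X :: "'b \<Rightarrow> 'a"
  have F1e: "F1 X = ennreal (exp (S X - t1))" for X
  proof -
    have "exp (S X - t1) = exp (-t1) * exp (S X)" by (simp add: exp_diff exp_minus field_simps)
    also have "exp (S X) = (\<Prod>k\<in>K. exp (if X k \<in> A then 1 else 0))"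
      unfolding S_def card_sum[OF K] by (rule exp_sum[OF K])
    also have "\<dots> = (\<Prod>k\<in>K. (if X k \<in> A then exp 1 else 1))" by (intro prod.cong) auto
    finally show ?thesis unfolding F1_def by (simp add: prod_ennreal ennreal_mult prod_nonneg)
  qed
  have F2e: "F2 X = ennreal (exp (t2 - S X))" for X
  proof -
    have "exp (t2 - S X) = exp t2 * exp (- S X)" by (simp add: exp_diff exp_minus field_simps)
    also have "exp (- S X) = (\<Prod>k\<in>K. exp (- (if X k \<in> A then 1 else 0)))"
      unfolding S_def card_sum[OF K] sum_negf[symmetric] by (rule exp_sum[OF K])
    also have "\<dots> = (\<Prod>k\<in>K. (if X k \<in> A then exp (-1) else 1))" by (intro prod.cong) auto
    finally show ?thesis unfolding F2_def by (simp add: prod_ennreal ennreal_mult prod_nonneg)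
  qed
  have ptw: "indicator Set X \<le> F1 X + F2 X" for X
  proof (cases "X \<in> Set")
    case True
    hence "t1 \<le> S X \<or> S X \<le> t2" using BS by (simp add: Set_def S_def)
    hence "1 \<le> exp (S X - t1) \<or> 1 \<le> exp (t2 - S X)" by auto
    hence "ennreal 1 \<le> ennreal (exp (S X - t1)) + ennreal (exp (t2 - S X))"
      by (metis add.commute add_increasing2 ennreal_leI zero_le ennreal_le_iff)
    thus ?thesis using True by (simp add: F1e F2e)
  qed simp
  have I1: "(\<integral>\<^sup>+ X. F1 X \<partial>PiM K (\<lambda>_. N)) = ennreal (exp (-t1) * (exp 1 * p + 1 * (1 - p)) ^ m)"
  proof -
    have "(\<integral>\<^sup>+ X. F1 X \<partial>PiM K (\<lambda>_. N)) = ennreal (exp (-t1)) * (\<integral>\<^sup>+ X. (\<Prod>k\<in>K. ennreal (if X k \<in> A then exp 1 else 1)) \<partial>PiM K (\<lambda>_. N))"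
      unfolding F1_def using K by (intro nn_integral_cmult) measurable
    also have "\<dots> = ennreal (exp (-t1)) * ennreal ((exp 1 * p + 1 * (1 - p)) ^ m)"
      unfolding p_def m_def by (subst prod_integral_iid[OF N K A]) auto
    finally show ?thesis using p by (simp add: ennreal_mult)
  qed
  have I2: "(\<integral>\<^sup>+ X. F2 X \<partial>PiM K (\<lambda>_. N)) = ennreal (exp t2 * (exp (-1) * p + 1 * (1 - p)) ^ m)"
  proof -
    have "(\<integral>\<^sup>+ X. F2 X \<partial>PiM K (\<lambda>_. N)) = ennreal (exp t2) * (\<integral>\<^sup>+ X. (\<Prod>k\<in>K. ennreal (if X k \<in> A then exp (-1) else 1)) \<partial>PiM K (\<lambda>_. N))"
      unfolding F2_def using K by (intro nn_integral_cmult) measurable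
    also have "\<dots> = ennreal (exp t2) * ennreal ((exp (-1) * p + 1 * (1 - p)) ^ m)"
      unfolding p_def m_def by (subst prod_integral_iid[OF N K A]) auto
    finally show ?thesis using p by (simp add: ennreal_mult)
  qed
  have b1: "exp (-t1) * (exp 1 * p + 1 * (1 - p)) ^ m \<le> exp (real m * p * (exp 1 - 1) - t1)"
  proof -
    have "exp 1 * p + 1 * (1 - p) = 1 + p * (exp 1 - 1)" by (simp add: algebra_simps)
    also have "\<dots> \<le> exp (p * (exp 1 - 1))" by (rule exp_ge_add_one_self)
    finally have "(exp 1 * p + 1 * (1 - p)) ^ m \<le> exp (p * (exp 1 - 1)) ^ m"
      using p by (intro power_mono) (auto intro: add_nonneg_nonneg)
    also have "\<dots> = exp (real m * (p * (exp 1 - 1)))" by (simp add: exp_of_nat_mult)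
    finally have "exp (-t1) * (exp 1 * p + 1 * (1 - p)) ^ m \<le> exp (-t1) * exp (real m * (p * (exp 1 - 1)))"
      by (intro mult_left_mono) auto
    also have "\<dots> = exp (real m * p * (exp 1 - 1) - t1)" by (simp add: mult_exp_exp algebra_simps)
    finally show ?thesis .
  qed
  have b2: "exp t2 * (exp (-1) * p + 1 * (1 - p)) ^ m \<le> exp (t2 - real m * p * (1 - exp (-1)))"
  proof -
    have "exp (-1) * p + 1 * (1 - p) = 1 + (- p * (1 - exp (-1)))" by (simp add: algebra_simps)
    also have "\<dots> \<le> exp (- p * (1 - exp (-1)))" by (rule exp_ge_add_one_self)
    finally have "(exp (-1) * p + 1 * (1 - p)) ^ m \<le> exp (- p * (1 - exp (-1))) ^ m"
      using p by (intro power_mono) (auto intro: add_nonneg_nonneg)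
    also have "\<dots> = exp (real m * (- p * (1 - exp (-1))))" by (rule exp_of_nat_mult[symmetric])
    finally have "exp t2 * (exp (-1) * p + 1 * (1 - p)) ^ m \<le> exp t2 * exp (real m * (- p * (1 - exp (-1))))"
      by (intro mult_left_mono) auto
    also have "\<dots> = exp (t2 - real m * p * (1 - exp (-1)))" by (simp add: mult_exp_exp algebra_simps)
    finally show ?thesis .
  qed
  show ?thesis
  proof -
    have True: "Set \<in> sets (PiM K (\<lambda>_. N))" using B by (simp add: Set_def)
    have "emeasure (PiM K (\<lambda>_. N)) Set = (\<integral>\<^sup>+ X. indicator Set X \<partial>PiM K (\<lambda>_. N))"
      using True by simp
    also have "\<dots> \<le> (\<integral>\<^sup>+ X. F1 X + F2 X \<partial>PiM K (\<lambda>_. N))"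
      by (intro nn_integral_mono ptw)
    also have "\<dots> = (\<integral>\<^sup>+ X. F1 X \<partial>PiM K (\<lambda>_. N)) + (\<integral>\<^sup>+ X. F2 X \<partial>PiM K (\<lambda>_. N))"
      unfolding F1_def F2_def using K by (intro nn_integral_add) measurable
    also have "\<dots> \<le> ennreal (exp (real m * p * (exp 1 - 1) - t1)) + ennreal (exp (t2 - real m * p * (1 - exp (-1))))"
      unfolding I1 I2 using b1 b2 by (intro add_mono ennreal_leI)
    also have "\<dots> = ennreal (exp (real m * p * (exp 1 - 1) - t1) + exp (t2 - real m * p * (1 - exp (-1))))"
      by (simp add: ennreal_plus)
    finally show ?thesis by (simp add: Set_def m_def p_def)
  qed
qed




lemma borel_measurable_cross3[measurable (raw)]:
  assumes f: "f \<in> borel_measurable M" and g: "g \<in> borel_measurable M"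
  shows "(\<lambda>x. cross3 (f x) (g x) :: real^3) \<in> borel_measurable M"
proof -
  have c: "(\<lambda>p::(real^3) \<times> (real^3). cross3 (fst p) (snd p)) \<in> borel_measurable borel"
    by (intro borel_measurable_continuous_onI continuous_on_cross continuous_on_fst continuous_on_snd continuous_on_id)
  have "(\<lambda>x. (f x, g x)) \<in> borel_measurable M" using f g by (rule borel_measurable_Pair)
  from measurable_compose[OF this c] show ?thesis by simp
qed

lemma unif_ps: "prob_space unif_S2" by (rule unif_prob)

lemma measure_le_all_small:
  fixes \<mu> :: real
  assumes "0 \<le> \<mu>" "\<mu> \<le> 1" "\<And>s. 0 < s \<Longrightarrow> s \<le> 1 \<Longrightarrow> \<mu> \<le> 8 * s"
  shows "\<mu> = 0"
proof (rule ccontr)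
  assume "\<mu> \<noteq> 0"
  hence "\<mu> > 0" using assms by simp
  hence "\<mu> \<le> 8 * (\<mu> / 16)" using assms by (intro assms(3)) auto
  thus False using \<open>\<mu> > 0\<close> by simp
qed

lemma null_sub_band:
  fixes w :: "real^3"
  assumes w: "w \<noteq> 0" and sub: "N \<subseteq> {x. x \<bullet> w = 0}" and N: "N \<in> sets borel"
  shows "measure unif_S2 N = 0"
proof (rule measure_le_all_small)
  interpret prob_space unif_S2 by (rule unif_ps)
  show "0 \<le> measure unif_S2 N" by simp
  show "measure unif_S2 N \<le> 1" by (rule prob_le_1)
  fix s :: real assume s: "0 < s" "s \<le> 1"
  have "measure unif_S2 N \<le> measure unif_S2 {x. \<bar>x \<bullet> w\<bar> \<le> s * norm x * norm w}"
    using sub s by (intro finite_measure_mono) auto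
  also have "\<dots> \<le> 8 * s" using band(2)[OF w, of s] s by simp
  finally show "measure unif_S2 N \<le> 8 * s" .
qed

lemma null_zero: "measure unif_S2 {0} = 0"
  by (rule null_sub_band[of "axis 1 1"]) auto

lemma null_cross:
  fixes a :: "real^3"
  assumes a: "a \<noteq> 0"
  shows "measure unif_S2 {y. cross3 a y = 0} = 0"
proof -
  obtain e :: "real^3" where e: "cross3 a e \<noteq> 0"
    using cross_basis_nonzero[OF a] by blast
  have "y \<bullet> cross3 a e = 0" if "cross3 a y = 0" for y
  proof -
    have "y \<bullet> cross3 a e = (cross3 a e) \<bullet> y" by (simp add: inner_commute)
    also have "\<dots> = (cross3 e y) \<bullet> a" by (rule cross_triple)
    also have "\<dots> = (cross3 y a) \<bullet> e" by (rule cross_triple)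
    also have "cross3 y a = - cross3 a y" by (simp add: cross3_simps)
    finally show ?thesis using that by simp
  qed
  thus ?thesis by (intro null_sub_band[OF e]) auto
qed

lemma Q_meas[measurable]:
  assumes [measurable]: "f \<in> borel_measurable M" "g \<in> borel_measurable M" "h \<in> borel_measurable M"
  shows "Measurable.pred M (\<lambda>x. Q s (f x) (g x) (h x))"
  unfolding Q_def by measurable


lemma upd_set_meas:
  assumes y: "y \<in> space (M i)" and B: "B \<in> sets (PiM (insert i I) M)"
  shows "{X \<in> space (PiM I M). X(i := y) \<in> B} \<in> sets (PiM I M)"
proof -
  have m: "(\<lambda>X. X(i := y)) \<in> measurable (PiM I M) (PiM (insert i I) M)"
    by (rule measurable_fun_upd[where J=I]) (use y in auto)
  show ?thesis using measurable_sets[OF m B] by (simp add: vimage_def Int_def conj_commute)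
qed

lemma comp_meas: "k \<in> I \<Longrightarrow> (\<lambda>X. X k) \<in> borel_measurable (PiM I (\<lambda>_. unif_S2))"
  using measurable_component_singleton[of k I "\<lambda>_. unif_S2"]
  by (simp add: measurable_cong_sets[OF refl sets_unif])

lemma cnt_meas:
  assumes "finite J" "i \<in> I" "j \<in> I" "J \<subseteq> I"
  shows "(\<lambda>X. real (card {k\<in>J. Q s (X k) (X i) (X j)})) \<in> borel_measurable (PiM I (\<lambda>_. unif_S2))"
proof -
  have "(\<lambda>X. (\<Sum>k\<in>J. if Q s (X k) (X i) (X j) then 1 else 0 :: real)) \<in> borel_measurable (PiM I (\<lambda>_. unif_S2))"
  proof (rule borel_measurable_sum)
    fix k assume "k \<in> J"
    hence k: "k \<in> I" using assms by auto
    show "(\<lambda>X. if Q s (X k) (X i) (X j) then 1 else 0 :: real) \<in> borel_measurable (PiM I (\<lambda>_. unif_S2))"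
    proof (rule measurable_If)
      show "{X \<in> space (PiM I (\<lambda>_. unif_S2)). Q s (X k) (X i) (X j)} \<in> sets (PiM I (\<lambda>_. unif_S2))"
        by (intro predE Q_meas comp_meas k assms)
    qed auto
  qed
  thus ?thesis using assms(1) by (simp add: card_sum)
qed


lemma Q_self: "cross3 a b \<noteq> 0 \<Longrightarrow> 0 \<le> s \<Longrightarrow> Q s a a b \<and> Q s b a b"
  by (simp add: Q_def dot_cross_self inner_commute)

lemma pair_bound:
  fixes n i j :: nat and s lo hi \<epsilon> :: real
  assumes s: "0 \<le> s" "s \<le> 1" and ij: "i < n" "j < n" "i \<noteq> j" and eps: "0 \<le> \<epsilon>"
    and H: "\<And>p. s/128 \<le> p \<Longrightarrow> p \<le> 8 * s \<Longrightarrow>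
      exp (real (n-2) * p * (exp 1 - 1) - (hi - 2)) + exp (lo - real (n-2) * p * (1 - exp (-1))) \<le> \<epsilon>"
  shows "emeasure (PiM {..<n} (\<lambda>_. unif_S2)) {X \<in> space (PiM {..<n} (\<lambda>_. unif_S2)).
     \<not> (lo \<le> real (card {k\<in>{..<n}. Q s (X k) (X i) (X j)}) \<and> real (card {k\<in>{..<n}. Q s (X k) (X i) (X j)}) \<le> hi)}
     \<le> ennreal \<epsilon>"
proof -
  interpret U: prob_space unif_S2 by (rule unif_ps)
  have PS: "product_sigma_finite (\<lambda>_::nat. unif_S2)"
    by (simp add: product_sigma_finite_def U.sigma_finite_measure_axioms)
  have PK: "prob_space (PiM J (\<lambda>_::nat. unif_S2))" for J by (rule prob_space_PiM) (rule unif_ps)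
  define K where "K = {..<n} - {i,j}"
  have K: "finite K" "i \<notin> insert j K" "j \<notin> K" "finite (insert j K)" using ij by (auto simp: K_def)
  have I: "{..<n} = insert i (insert j K)" using ij by (auto simp: K_def)
  have cK: "card K = n - 2" using ij unfolding K_def by (subst card_Diff_subset) auto
  define cnt where "cnt X = real (card {k\<in>{..<n}. Q s (X k) (X i) (X j)})" for X :: "nat \<Rightarrow> real^3"
  have cm[measurable]: "cnt \<in> borel_measurable (PiM {..<n} (\<lambda>_. unif_S2))"
    unfolding cnt_def using ij by (intro cnt_meas) auto
  define bad where "bad = {X \<in> space (PiM {..<n} (\<lambda>_. unif_S2)). \<not> (lo \<le> cnt X \<and> cnt X \<le> hi)}"
  have bad_meas0: "bad \<in> sets (PiM {..<n} (\<lambda>_. unif_S2))" unfolding bad_def by measurable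
  hence bad_meas: "bad \<in> sets (PiM (insert i (insert j K)) (\<lambda>_. unif_S2))" by (simp add: I)
  define B1 where "B1 yi = {X \<in> space (PiM (insert j K) (\<lambda>_. unif_S2)). X(i := yi) \<in> bad}" for yi
  have B1_meas: "B1 yi \<in> sets (PiM (insert j K) (\<lambda>_. unif_S2))" for yi
    unfolding B1_def by (rule upd_set_meas[OF _ bad_meas]) simp
  define B2 where "B2 yi yj = {X \<in> space (PiM K (\<lambda>_. unif_S2)). X(j := yj) \<in> B1 yi}" for yi yj
  have B2_meas: "B2 yi yj \<in> sets (PiM K (\<lambda>_. unif_S2))" for yi yj
    unfolding B2_def by (rule upd_set_meas[OF _ B1_meas]) simp
  have inner: "emeasure (PiM K (\<lambda>_. unif_S2)) (B2 yi yj) \<le> ennreal \<epsilon> + indicator {y. cross3 yi y = 0} yj" for yi yj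
  proof (cases "cross3 yi yj = 0")
    case True
    have "emeasure (PiM K (\<lambda>_. unif_S2)) (B2 yi yj) \<le> 1" by (rule prob_space.emeasure_le_1[OF PK])
    also have "\<dots> \<le> ennreal \<epsilon> + indicator {y. cross3 yi y = 0} yj" using True by simp
    finally show ?thesis .
  next
    case False
    define c where "c = cross3 yi yj"
    have c: "c \<noteq> 0" using False by (simp add: c_def)
    define A where "A = {x. Q s x yi yj}"
    have A_eq: "A = {x. \<bar>x \<bullet> c\<bar> \<le> s * norm x * norm c}" using c by (auto simp: A_def Q_def c_def)
    have A_meas: "A \<in> sets unif_S2" unfolding A_eq by simp
    have pb: "s/128 \<le> measure unif_S2 A" "measure unif_S2 A \<le> 8 * s" unfolding A_eq using band[OF c s] by auto
    have BS: "hi - 2 \<le> real (card {k\<in>K. X k \<in> A}) \<or> real (card {k\<in>K. X k \<in> A}) \<le> lo" if X: "X \<in> B2 yi yj" for X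
    proof -
      define Z where "Z = X(j := yj, i := yi)"
      have Zbad: "Z \<in> bad" using X by (simp add: B2_def B1_def Z_def)
      have Zi: "Z i = yi" "Z j = yj" using ij by (auto simp: Z_def)
      have Zk: "Z k = X k" if "k \<in> K" for k using that by (auto simp: Z_def K_def)
      have qs: "Q s yi yi yj" "Q s yj yi yj" using Q_self[OF False s(1)] by auto
      have set_eq: "{k\<in>{..<n}. Q s (Z k) (Z i) (Z j)} = insert i (insert j {k\<in>K. X k \<in> A})"
        unfolding I Zi using qs Zk Zi by (auto simp: A_def)
      have "cnt Z = 2 + real (card {k\<in>K. X k \<in> A})"
        unfolding cnt_def set_eq using K ij by (simp add: card_insert_if)
      thus ?thesis using Zbad by (auto simp: bad_def)
    qed
    have "emeasure (PiM K (\<lambda>_. unif_S2)) (B2 yi yj)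
        \<le> ennreal (exp (real (card K) * measure unif_S2 A * (exp 1 - 1) - (hi - 2)) + exp (lo - real (card K) * measure unif_S2 A * (1 - exp (-1))))"
      by (rule chernoff[OF unif_ps K(1) A_meas B2_meas BS])
    also have "\<dots> \<le> ennreal \<epsilon>" unfolding cK using H[OF pb] by (rule ennreal_leI)
    finally show ?thesis using False by simp
  qed
  have mid: "emeasure (PiM (insert j K) (\<lambda>_. unif_S2)) (B1 yi) \<le> ennreal \<epsilon> + indicator {0} yi" for yi
  proof (cases "yi = 0")
    case True
    have "emeasure (PiM (insert j K) (\<lambda>_. unif_S2)) (B1 yi) \<le> 1" by (rule prob_space.emeasure_le_1[OF PK])
    also have "\<dots> \<le> ennreal \<epsilon> + indicator {0} yi" using True by simp
    finally show ?thesis .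
  next
    case False
    have Nm: "{y. cross3 yi y = 0} \<in> sets unif_S2" by simp
    have "emeasure (PiM (insert j K) (\<lambda>_. unif_S2)) (B1 yi) = (\<integral>\<^sup>+ yj. emeasure (PiM K (\<lambda>_. unif_S2)) (B2 yi yj) \<partial>unif_S2)"
      unfolding B2_def by (rule emeasure_PiM_insert_split[OF PS K(1) K(3) B1_meas])
    also have "\<dots> \<le> (\<integral>\<^sup>+ yj. ennreal \<epsilon> + indicator {y. cross3 yi y = 0} yj \<partial>unif_S2)"
      by (intro nn_integral_mono inner)
    also have "\<dots> = ennreal \<epsilon> + emeasure unif_S2 {y. cross3 yi y = 0}"
      using Nm by (subst nn_integral_add) (auto simp: U.emeasure_space_1[simplified])
    also have "emeasure unif_S2 {y. cross3 yi y = 0} = 0"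
      using null_cross[OF False] Nm by (simp add: U.emeasure_eq_measure)
    finally show ?thesis using False by simp
  qed
  have "emeasure (PiM {..<n} (\<lambda>_. unif_S2)) bad = emeasure (PiM (insert i (insert j K)) (\<lambda>_. unif_S2)) bad"
    by (simp add: I)
  also have "\<dots> = (\<integral>\<^sup>+ yi. emeasure (PiM (insert j K) (\<lambda>_. unif_S2)) (B1 yi) \<partial>unif_S2)"
    unfolding B1_def by (rule emeasure_PiM_insert_split[OF PS K(4) K(2) bad_meas])
  also have "\<dots> \<le> (\<integral>\<^sup>+ yi. ennreal \<epsilon> + indicator {0} yi \<partial>unif_S2)"
    by (intro nn_integral_mono mid)
  also have "\<dots> = ennreal \<epsilon> + emeasure unif_S2 {0}"
    by (subst nn_integral_add) (auto simp: U.emeasure_space_1[simplified])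
  also have "emeasure unif_S2 {0} = 0"
    using null_zero by (simp add: U.emeasure_eq_measure)
  finally show ?thesis by (simp add: bad_def cnt_def)
qed




lemma sin_lower: fixes x :: real assumes "0 \<le> x" "x \<le> 1" shows "x / 2 \<le> sin x"
proof -
  have s3: "(\<Sum>m<3. sin_coeff m * x ^ m) = x" by (simp add: eval_nat_numeral sin_coeff_def)
  have "\<bar>sin x - x\<bar> \<le> inverse (fact 3) * \<bar>x\<bar> ^ 3" using Maclaurin_sin_bound[of x 3] unfolding s3 .
  also have "\<dots> = x ^ 3 / 6" using assms by (simp add: eval_nat_numeral)
  also have "x ^ 3 \<le> x"
  proof -
    have xx: "x * x \<le> 1" using assms by (intro mult_le_one) auto
    have "x ^ 3 = x * (x * x)" by (simp add: eval_nat_numeral)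
    also have "\<dots> \<le> x * 1" using xx assms by (intro mult_left_mono) auto
    finally show ?thesis by simp
  qed
  finally show ?thesis by linarith
qed

lemma exp1_bounds: "2 \<le> exp (1::real)" "exp (1::real) \<le> 4" "1/2 \<le> 1 - exp (-1::real)"
proof -
  show e2: "2 \<le> exp (1::real)" using exp_ge_add_one_self[of 1] by simp
  have "1/2 \<le> exp (-1/2::real)" using exp_ge_add_one_self[of "-1/2"] by simp
  hence "exp (1/2::real) \<le> 2" by (simp add: exp_minus field_simps)
  hence "exp (1/2::real) * exp (1/2) \<le> 2 * 2" by (intro mult_mono) auto
  thus "exp (1::real) \<le> 4" by (simp add: mult_exp_exp)
  have "exp (-1::real) = 1 / exp 1" by (simp add: exp_minus field_simps)
  also have "\<dots> \<le> 1/2" using e2 by (simp add: field_simps)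
  finally show "1/2 \<le> 1 - exp (-1::real)" by simp
qed

lemma rho_eq:
  assumes "n > 0"
  shows "(2 + \<Delta>) * sqrt (pi / real n) = sph_r * (2 * pi * (2 + \<Delta>) / sqrt (real n))"
proof -
  have sp: "sqrt pi * sqrt pi = pi" by simp
  have "sph_r * (2 * pi * (2 + \<Delta>) / sqrt (real n)) = (2 + \<Delta>) * (pi / sqrt pi) / sqrt (real n)"
    using assms by (simp add: sph_r_def field_simps)
  also have "pi / sqrt pi = sqrt pi" using sp pi_gt_zero by (metis nonzero_mult_div_cancel_left real_sqrt_eq_zero_cancel_iff pi_neq_zero)
  finally show ?thesis by (simp add: real_sqrt_divide) (metis eq_commute)
qed

lemma num_through_eq:
  assumes th: "0 \<le> \<theta>" "\<theta> < pi/2" and rho: "(2 + \<Delta>) * sqrt (pi / real n) = sph_r * \<theta>" and ij: "i \<noteq> j"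
  shows "num_through \<Delta> n \<omega> i j = card {k\<in>{..<n}. Q (sin \<theta>) (fst \<omega> k) (fst \<omega> i) (fst \<omega> j)}"
proof -
  have "Q (sin \<theta>) x (fst \<omega> (min i j)) (fst \<omega> (max i j)) = Q (sin \<theta>) x (fst \<omega> i) (fst \<omega> j)" for x
    by (cases "i \<le> j") (auto simp: min_def max_def Q_sym)
  thus ?thesis unfolding num_through_def zpt_def rho passes_isect[OF th] by simp
qed


lemma H_bound:
  fixes A p :: real and n :: nat
  assumes A: "8 \<le> A" and n: "4 \<le> n" and An: "A \<le> sqrt (real n)"
    and p: "sin (A / sqrt n) / 128 \<le> p" "p \<le> 8 * sin (A / sqrt n)"
  shows "exp (real (n-2) * p * (exp 1 - 1) - ((24*A+1) * sqrt n - 2)) + exp ((A/2048) * sqrt n - real (n-2) * p * (1 - exp (-1)))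
    \<le> exp (2 - sqrt n) + exp (- sqrt n / 256)"
proof -
  define r where "r = sqrt (real n)"
  have r: "r > 0" using n by (simp add: r_def)
  have rr: "real n = r * r" using n by (simp add: r_def)
  define \<theta> where "\<theta> = A / r"
  have th: "0 \<le> \<theta>" "\<theta> \<le> 1" using A An r by (auto simp: \<theta>_def r_def field_simps)
  have nth: "real n * \<theta> = A * r" using r by (simp add: \<theta>_def rr)
  have sl: "\<theta> / 2 \<le> sin \<theta>" by (rule sin_lower[OF th])
  have su: "sin \<theta> \<le> \<theta>" by (rule sin_x_le_x[OF th(1)])
  have p': "\<theta> / 256 \<le> p" "p \<le> 8 * \<theta>" using p sl su unfolding \<theta>_def[symmetric] r_def[symmetric] by auto
  have p0: "0 \<le> p" using p' th by linarith
  have e: "2 \<le> exp (1::real)" "exp (1::real) \<le> 4" "1/2 \<le> 1 - exp (-1::real)" by (rule exp1_bounds)+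
  have n2: "real (n-2) \<le> real n" "real n / 2 \<le> real (n-2)" using n by auto
  have "real (n-2) * p * (exp 1 - 1) \<le> real n * (8 * \<theta>) * 3"
    using n2 p' p0 e th by (intro mult_mono) auto
  also have "\<dots> = 24 * (A * r)" unfolding nth[symmetric] by simp
  finally have f1: "real (n-2) * p * (exp 1 - 1) - ((24*A+1) * r - 2) \<le> 2 - r" by (simp add: algebra_simps)
  have "(real n / 2) * (\<theta> / 256) * (1/2) \<le> real (n-2) * p * (1 - exp (-1))"
    using n2 p' p0 e th by (intro mult_mono) auto
  moreover have "(real n / 2) * (\<theta> / 256) * (1/2) = A * r / 1024" using nth by simp
  ultimately have "(A/2048) * r - real (n-2) * p * (1 - exp (-1)) \<le> - (A/2048) * r" by simp
  also have "\<dots> \<le> - r / 256" using A r by (simp add: field_simps)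
  finally have f2: "(A/2048) * r - real (n-2) * p * (1 - exp (-1)) \<le> - r / 256" .
  show ?thesis unfolding r_def[symmetric] using f1 f2 by (intro add_mono) auto
qed


definition badset :: "nat \<Rightarrow> real \<Rightarrow> real \<Rightarrow> real \<Rightarrow> nat \<times> nat \<Rightarrow> (nat \<Rightarrow> real^3) set" where
  "badset n s lo hi p = {X \<in> space (PiM {..<n} (\<lambda>_. unif_S2)).
     \<not> (lo \<le> real (card {k\<in>{..<n}. Q s (X k) (X (fst p)) (X (snd p))}) \<and>
        real (card {k\<in>{..<n}. Q s (X k) (X (fst p)) (X (snd p))}) \<le> hi)}"

definition goodset :: "nat \<Rightarrow> real \<Rightarrow> real \<Rightarrow> real \<Rightarrow> (nat \<Rightarrow> real^3) set" where
  "goodset n s lo hi = {X \<in> space (PiM {..<n} (\<lambda>_. unif_S2)). \<forall>i<n. \<forall>j<n. i \<noteq> j \<longrightarrow>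
     lo \<le> real (card {k\<in>{..<n}. Q s (X k) (X i) (X j)}) \<and> real (card {k\<in>{..<n}. Q s (X k) (X i) (X j)}) \<le> hi}"

definition offdiag :: "nat \<Rightarrow> (nat \<times> nat) set" where
  "offdiag n = {p. fst p < n \<and> snd p < n \<and> fst p \<noteq> snd p}"

lemma offdiag_finite: "finite (offdiag n)"
  by (rule finite_subset[of _ "{..<n} \<times> {..<n}"]) (auto simp: offdiag_def)

lemma offdiag_card: "real (card (offdiag n)) \<le> real n ^ 2"
proof -
  have "card (offdiag n) \<le> card ({..<n} \<times> {..<n})"
    by (rule card_mono) (auto simp: offdiag_def)
  thus ?thesis by (simp add: power2_eq_square flip: of_nat_mult)
qed

lemma badset_meas: "p \<in> offdiag n \<Longrightarrow> badset n s lo hi p \<in> sets (PiM {..<n} (\<lambda>_. unif_S2))"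
proof -
  assume p: "p \<in> offdiag n"
  have [measurable]: "(\<lambda>X. real (card {k\<in>{..<n}. Q s (X k) (X (fst p)) (X (snd p))})) \<in> borel_measurable (PiM {..<n} (\<lambda>_. unif_S2))"
    using p by (intro cnt_meas) (auto simp: offdiag_def)
  show ?thesis unfolding badset_def by measurable
qed

lemma goodset_eq: "goodset n s lo hi = space (PiM {..<n} (\<lambda>_. unif_S2)) - (\<Union>p\<in>offdiag n. badset n s lo hi p)"
proof (intro set_eqI iffI)
  fix X assume "X \<in> goodset n s lo hi"
  thus "X \<in> space (PiM {..<n} (\<lambda>_. unif_S2)) - (\<Union>p\<in>offdiag n. badset n s lo hi p)"
    unfolding goodset_def badset_def offdiag_def by auto
next
  fix X assume X: "X \<in> space (PiM {..<n} (\<lambda>_. unif_S2)) - (\<Union>p\<in>offdiag n. badset n s lo hi p)"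
  have "lo \<le> real (card {k\<in>{..<n}. Q s (X k) (X i) (X j)}) \<and> real (card {k\<in>{..<n}. Q s (X k) (X i) (X j)}) \<le> hi"
    if "i < n" "j < n" "i \<noteq> j" for i j
  proof -
    have "(i, j) \<in> offdiag n" using that by (simp add: offdiag_def)
    hence "X \<notin> badset n s lo hi (i, j)" using X by blast
    thus ?thesis using X by (simp add: badset_def)
  qed
  thus "X \<in> goodset n s lo hi" using X unfolding goodset_def by blast
qed

lemma goodset_meas: "goodset n s lo hi \<in> sets (PiM {..<n} (\<lambda>_. unif_S2))"
  unfolding goodset_eq using badset_meas offdiag_finite
  by (intro sets.Diff sets.top sets.finite_UN) auto

lemma good_bound:
  fixes n :: nat and s lo hi \<epsilon> :: real
  assumes s: "0 \<le> s" "s \<le> 1" and eps: "0 \<le> \<epsilon>"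
    and H: "\<And>p. s/128 \<le> p \<Longrightarrow> p \<le> 8 * s \<Longrightarrow>
      exp (real (n-2) * p * (exp 1 - 1) - (hi - 2)) + exp (lo - real (n-2) * p * (1 - exp (-1))) \<le> \<epsilon>"
  shows "1 - real n ^ 2 * \<epsilon> \<le> measure (PiM {..<n} (\<lambda>_. unif_S2)) (goodset n s lo hi)"
proof -
  interpret P: prob_space "PiM {..<n} (\<lambda>_. unif_S2)" by (rule prob_space_PiM) (rule unif_ps)
  have bm: "measure (PiM {..<n} (\<lambda>_. unif_S2)) (badset n s lo hi p) \<le> \<epsilon>" if p: "p \<in> offdiag n" for p
  proof -
    obtain i j where ij: "p = (i, j)" "i < n" "j < n" "i \<noteq> j" using p by (cases p) (auto simp: offdiag_def)
    have "ennreal (measure (PiM {..<n} (\<lambda>_. unif_S2)) (badset n s lo hi p)) \<le> ennreal \<epsilon>"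
      unfolding P.emeasure_eq_measure[symmetric] badset_def using pair_bound[OF s ij(2-4) eps H] ij(1) by simp
    thus ?thesis using eps by simp
  qed
  have U: "(\<Union>p\<in>offdiag n. badset n s lo hi p) \<in> sets (PiM {..<n} (\<lambda>_. unif_S2))"
    using badset_meas offdiag_finite by (intro sets.finite_UN) auto
  have "measure (PiM {..<n} (\<lambda>_. unif_S2)) (\<Union>p\<in>offdiag n. badset n s lo hi p)
      \<le> (\<Sum>p\<in>offdiag n. measure (PiM {..<n} (\<lambda>_. unif_S2)) (badset n s lo hi p))"
    using badset_meas offdiag_finite by (intro P.finite_measure_subadditive_finite) auto
  also have "\<dots> \<le> (\<Sum>p\<in>offdiag n. \<epsilon>)" by (intro sum_mono bm)
  also have "\<dots> = real (card (offdiag n)) * \<epsilon>" by simp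
  also have "\<dots> \<le> real n ^ 2 * \<epsilon>" using offdiag_card eps by (intro mult_right_mono) auto
  finally have "measure (PiM {..<n} (\<lambda>_. unif_S2)) (\<Union>p\<in>offdiag n. badset n s lo hi p) \<le> real n ^ 2 * \<epsilon>" .
  moreover have "measure (PiM {..<n} (\<lambda>_. unif_S2)) (goodset n s lo hi) = 1 - measure (PiM {..<n} (\<lambda>_. unif_S2)) (\<Union>p\<in>offdiag n. badset n s lo hi p)"
    unfolding goodset_eq using U by (rule P.prob_compl)
  ultimately show ?thesis by simp
qed

lemma config_reduce:
  assumes eq: "\<And>\<omega> i j. i < n \<Longrightarrow> j < n \<Longrightarrow> i \<noteq> j \<Longrightarrow> num_through \<Delta> n \<omega> i j = card {k\<in>{..<n}. Q s (fst \<omega> k) (fst \<omega> i) (fst \<omega> j)}"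
  shows "measure (config_space n) {\<omega> \<in> space (config_space n). \<forall>i<n. \<forall>j<n. i \<noteq> j \<longrightarrow>
          lo \<le> real (num_through \<Delta> n \<omega> i j) \<and> real (num_through \<Delta> n \<omega> i j) \<le> hi}
       = measure (PiM {..<n} (\<lambda>_. unif_S2)) (goodset n s lo hi)"
proof -
  interpret P: prob_space "PiM {..<n} (\<lambda>_. unif_S2)" by (rule prob_space_PiM) (rule unif_ps)
  have coinp: "prob_space coin" unfolding coin_def by (rule prob_space_measure_pmf)
  interpret C: prob_space "PiM (pairs n) (\<lambda>_. coin)" by (rule prob_space_PiM) (rule coinp)
  have set_eq: "{\<omega> \<in> space (config_space n). \<forall>i<n. \<forall>j<n. i \<noteq> j \<longrightarrow>
          lo \<le> real (num_through \<Delta> n \<omega> i j) \<and> real (num_through \<Delta> n \<omega> i j) \<le> hi}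
      = goodset n s lo hi \<times> space (PiM (pairs n) (\<lambda>_. coin))"
    by (auto simp: config_space_def space_pair_measure goodset_def eq)
  have "emeasure (config_space n) (goodset n s lo hi \<times> space (PiM (pairs n) (\<lambda>_. coin)))
     = emeasure (PiM {..<n} (\<lambda>_. unif_S2)) (goodset n s lo hi) * emeasure (PiM (pairs n) (\<lambda>_. coin)) (space (PiM (pairs n) (\<lambda>_. coin)))"
    unfolding config_space_def by (intro C.emeasure_pair_measure_Times goodset_meas) auto
  also have "\<dots> = emeasure (PiM {..<n} (\<lambda>_. unif_S2)) (goodset n s lo hi)" by (simp add: C.emeasure_space_1)
  finally show ?thesis unfolding set_eq measure_def by simp
qed




lemma limit_part: "(\<lambda>n::nat. 1 - real n ^ 2 * (exp (2 - sqrt (real n)) + exp (- sqrt (real n) / 256))) \<longlonglongrightarrow> 1"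
  by real_asymp

theorem lemma1:
  fixes \<Delta> :: real
  assumes "\<Delta> > 0"
  shows "\<exists>c C. 0 < c \<and> c \<le> C \<and>
    (\<lambda>n. measure (config_space n)
       {\<omega> \<in> space (config_space n). \<forall>i<n. \<forall>j<n. i \<noteq> j \<longrightarrow>
          c * sqrt (real n) \<le> real (num_through \<Delta> n \<omega> i j) \<and>
          real (num_through \<Delta> n \<omega> i j) \<le> C * sqrt (real n)}) \<longlonglongrightarrow> 1"
proof -
  define A where "A = 2 * pi * (2 + \<Delta>)"
  have A8: "8 \<le> A"
  proof -
    have "2 * 2 * 2 \<le> 2 * pi * (2 + \<Delta>)" using pi_ge_two assms by (intro mult_mono) auto
    thus ?thesis by (simp add: A_def)
  qed
  define c where "c = A / 2048"
  define C where "C = 24 * A + 1"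
  define \<epsilon> where "\<epsilon> n = exp (2 - sqrt (real n)) + exp (- sqrt (real n) / 256)" for n :: nat
  define f where "f n = measure (config_space n)
       {\<omega> \<in> space (config_space n). \<forall>i<n. \<forall>j<n. i \<noteq> j \<longrightarrow>
          c * sqrt (real n) \<le> real (num_through \<Delta> n \<omega> i j) \<and>
          real (num_through \<Delta> n \<omega> i j) \<le> C * sqrt (real n)}" for n
  have large: "eventually (\<lambda>n. 4 \<le> n \<and> 2 * A \<le> sqrt (real n)) sequentially"
  proof -
    have "eventually (\<lambda>n. max 4 (nat \<lceil>(2 * A)\<^sup>2\<rceil>) \<le> n) sequentially" by (rule eventually_ge_at_top)
    thus ?thesis
    proof (rule eventually_mono)
      fix n assume n: "max 4 (nat \<lceil>(2 * A)\<^sup>2\<rceil>) \<le> n"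
      hence "(2 * A)\<^sup>2 \<le> real n" by linarith
      hence "2 * A \<le> sqrt (real n)" by (rule real_le_rsqrt)
      thus "4 \<le> n \<and> 2 * A \<le> sqrt (real n)" using n by simp
    qed
  qed
  have ev: "eventually (\<lambda>n. 1 - real n ^ 2 * \<epsilon> n \<le> f n) sequentially"
    using large
  proof (rule eventually_mono)
    fix n assume n: "4 \<le> n \<and> 2 * A \<le> sqrt (real n)"
    have r: "sqrt (real n) > 0" using n by simp
    define \<theta> where "\<theta> = A / sqrt (real n)"
    have th: "0 \<le> \<theta>" "\<theta> \<le> 1/2" using n A8 r by (auto simp: \<theta>_def field_simps)
    have th2: "\<theta> < pi / 2" using th pi_ge_two by linarith
    have s: "0 \<le> sin \<theta>" "sin \<theta> \<le> 1" using th th2 by (auto intro: sin_ge_zero)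
    have rho: "(2 + \<Delta>) * sqrt (pi / real n) = sph_r * \<theta>"
      using rho_eq[of n \<Delta>] n by (simp add: \<theta>_def A_def)
    have eq: "num_through \<Delta> n \<omega> i j = card {k\<in>{..<n}. Q (sin \<theta>) (fst \<omega> k) (fst \<omega> i) (fst \<omega> j)}"
      if "i < n" "j < n" "i \<noteq> j" for \<omega> i j
      by (rule num_through_eq[OF th(1) th2 rho that(3)])
    have fn: "f n = measure (PiM {..<n} (\<lambda>_. unif_S2)) (goodset n (sin \<theta>) (c * sqrt (real n)) (C * sqrt (real n)))"
      unfolding f_def by (rule config_reduce[OF eq])
    have H: "exp (real (n-2) * p * (exp 1 - 1) - (C * sqrt (real n) - 2)) + exp (c * sqrt (real n) - real (n-2) * p * (1 - exp (-1))) \<le> \<epsilon> n"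
      if "sin \<theta> / 128 \<le> p" "p \<le> 8 * sin \<theta>" for p
    proof -
      have n4: "4 \<le> n" and An: "A \<le> sqrt (real n)" using n A8 by auto
      show ?thesis unfolding c_def C_def \<epsilon>_def
        by (rule H_bound[OF A8 n4 An]) (use that in \<open>simp_all add: \<theta>_def\<close>)
    qed
    have "1 - real n ^ 2 * \<epsilon> n \<le> measure (PiM {..<n} (\<lambda>_. unif_S2)) (goodset n (sin \<theta>) (c * sqrt (real n)) (C * sqrt (real n)))"
      by (rule good_bound[OF s _ H]) (simp add: \<epsilon>_def)
    thus "1 - real n ^ 2 * \<epsilon> n \<le> f n" by (simp add: fn)
  qed
  have up: "eventually (\<lambda>n. f n \<le> 1) sequentially"
  proof (rule always_eventually, rule allI)
    fix n
    have "prob_space (config_space n)" unfolding config_space_def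
      by (intro prob_space_pair prob_space_PiM unif_ps) (simp add: coin_def prob_space_measure_pmf)
    thus "f n \<le> 1" unfolding f_def by (rule prob_space.prob_le_1)
  qed
  have lim: "(\<lambda>n. 1 - real n ^ 2 * \<epsilon> n) \<longlonglongrightarrow> 1" unfolding \<epsilon>_def by (rule limit_part)
  have "f \<longlonglongrightarrow> 1" by (rule tendsto_sandwich[OF ev up lim tendsto_const])
  moreover have "0 < c" "c \<le> C" using A8 by (auto simp: c_def C_def)
  ultimately show ?thesis unfolding f_def by blast
qed


end
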